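(* Let $(\Omega,\mathcal{F})$ be a measurable space, $T:\Omega\to\Omega$ a measurable transformation and $V$ a $T$-invariant upper probability on $(\Omega,\mathcal{F})$. Then $V$ is ergodic if and only if there exists a probability $Q\in\mathcal{M}^e(T)\cap\operatorname{core}(V)$ such that for every $P\in\operatorname{core}(V)$, $P(A)=Q(A)$ for all $A\in\mathcal{I}$. Moreover, such a $Q$ is unique.
   Context: A capacity on $(\Omega,\mathcal{F})$ is a map $\mu:\mathcal{F}\to[0,1]$ with $\mu(\emptyset)=0$, $\mu(\Omega)=1$ and monotone. An upper probability is a capacity $V$ for which there is a weak*-compact set $\Lambda$ of probabilities (weak* = setwise convergence on $\mathcal{F}$) with $V(A)=\max_{P\in\Lambda}P(A)$ for all $A\in\mathcal{F}$. $V$ is $T$-invariant if $V(T^{-1}A)=V(A)$ for all $A$. $\mathcal{I}=\{A\in\mathcal{F}:T^{-1}A=A\}$. A $T$-invariant capacity $\mu$ is ergodic if for every $B\in\mathcal{I}$: $\mu(B)\in\{0,1\}$, and $\mu(B)=0$ or $\mu(\Omega\setminus B)=0$. $\operatorname{core}(\mu)$ is the set of finitely additive set functions $P:\mathcal{F}\to[0,1]$ with $P(\Omega)=1$ and $P(A)\le\mu(A)$ for all $A\in\mathcal{F}$ (for an upper probability these are all $\sigma$-additive). $\mathcal{M}^e(T)$ is the set of $T$-invariant probabilities $P$ on $(\Omega,\mathcal{F})$ that are ergodic, i.e. $P(A)\in\{0,1\}$ for all $A\in\mathcal{I}$. *)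

theory Defs
  imports "HOL-Analysis.Analysis"
begin

text \<open>Set functions on the measurable space M are represented as functions
  of type 'a set => real; only their values on sets M matter.\<close>

definition is_capacity :: "'a measure \<Rightarrow> ('a set \<Rightarrow> real) \<Rightarrow> bool" where
  "is_capacity M \<mu> \<longleftrightarrow>
     (\<forall>A\<in>sets M. 0 \<le> \<mu> A \<and> \<mu> A \<le> 1) \<and> \<mu> {} = 0 \<and> \<mu> (space M) = 1 \<and>
     (\<forall>A\<in>sets M. \<forall>B\<in>sets M. A \<subseteq> B \<longrightarrow> \<mu> A \<le> \<mu> B)"

definition is_prob :: "'a measure \<Rightarrow> ('a set \<Rightarrow> real) \<Rightarrow> bool" where
  "is_prob M P \<longleftrightarrow>
     (\<forall>A\<in>sets M. 0 \<le> P A) \<and> P (space M) = 1 \<and>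
     (\<forall>F::nat \<Rightarrow> 'a set. range F \<subseteq> sets M \<longrightarrow> disjoint_family F \<longrightarrow>
        (\<lambda>n. P (F n)) sums P (\<Union>n. F n))"

text \<open>Restriction of a set function to sets M (value 0 elsewhere); the product
  topology on 'a set => real of these restrictions is exactly the topology
  of setwise convergence on sets M.\<close>
definition restr_sf :: "'a measure \<Rightarrow> ('a set \<Rightarrow> real) \<Rightarrow> ('a set \<Rightarrow> real)" where
  "restr_sf M P = (\<lambda>A. if A \<in> sets M then P A else 0)"

definition upper_prob :: "'a measure \<Rightarrow> ('a set \<Rightarrow> real) \<Rightarrow> bool" where
  "upper_prob M V \<longleftrightarrow> is_capacity M V \<and>
     (\<exists>\<Lambda>. \<Lambda> \<subseteq> {P. is_prob M P} \<and> compact (restr_sf M ` \<Lambda>) \<and>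
        (\<forall>A\<in>sets M. (\<exists>P\<in>\<Lambda>. P A = V A) \<and> (\<forall>P\<in>\<Lambda>. P A \<le> V A)))"

definition sf_invariant :: "'a measure \<Rightarrow> ('a \<Rightarrow> 'a) \<Rightarrow> ('a set \<Rightarrow> real) \<Rightarrow> bool" where
  "sf_invariant M T \<mu> \<longleftrightarrow> (\<forall>A\<in>sets M. \<mu> (T -` A \<inter> space M) = \<mu> A)"

definition inv_sets :: "'a measure \<Rightarrow> ('a \<Rightarrow> 'a) \<Rightarrow> 'a set set" where
  "inv_sets M T = {A \<in> sets M. T -` A \<inter> space M = A}"

definition cap_ergodic :: "'a measure \<Rightarrow> ('a \<Rightarrow> 'a) \<Rightarrow> ('a set \<Rightarrow> real) \<Rightarrow> bool" where
  "cap_ergodic M T \<mu> \<longleftrightarrow> sf_invariant M T \<mu> \<and>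
     (\<forall>B\<in>inv_sets M T. (\<mu> B = 0 \<or> \<mu> B = 1) \<and> (\<mu> B = 0 \<or> \<mu> (space M - B) = 0))"

definition core :: "'a measure \<Rightarrow> ('a set \<Rightarrow> real) \<Rightarrow> ('a set \<Rightarrow> real) set" where
  "core M \<mu> = {P. (\<forall>A\<in>sets M. 0 \<le> P A \<and> P A \<le> 1) \<and> P (space M) = 1 \<and>
     (\<forall>A\<in>sets M. \<forall>B\<in>sets M. A \<inter> B = {} \<longrightarrow> P (A \<union> B) = P A + P B) \<and>
     (\<forall>A\<in>sets M. P A \<le> \<mu> A)}"

definition erg_probs :: "'a measure \<Rightarrow> ('a \<Rightarrow> 'a) \<Rightarrow> ('a set \<Rightarrow> real) set" where
  "erg_probs M T = {P. is_prob M P \<and> sf_invariant M T P \<and>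
     (\<forall>A\<in>inv_sets M T. P A = 0 \<or> P A = 1)}"

end

theory Submission
  imports Defs
begin


definition mkm :: "'a measure \<Rightarrow> ('a set \<Rightarrow> real) \<Rightarrow> 'a measure" where
  "mkm M P = measure_of (space M) (sets M) (\<lambda>A. ennreal (P A))"

lemma is_prob_empty:
  assumes "is_prob M P" shows "P {} = 0"
proof -
  have "(\<lambda>n. P ((\<lambda>_::nat. {}) n)) sums P (\<Union>n. (\<lambda>_::nat. {}) n)"
    using assms unfolding is_prob_def by (auto simp: disjoint_family_on_def)
  then have s: "(\<lambda>n::nat. P {}) sums P {}" by simp
  then have "(\<lambda>n::nat. P {}) \<longlonglongrightarrow> 0" using summable_LIMSEQ_zero sums_summable by blast
  then show ?thesis using LIMSEQ_unique tendsto_const by blast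
qed

lemma is_prob_mkm:
  assumes "is_prob M P"
  shows "finite_measure (mkm M P)" "sets (mkm M P) = sets M" "space (mkm M P) = space M"
    "\<And>A. A \<in> sets M \<Longrightarrow> emeasure (mkm M P) A = ennreal (P A)"
    "\<And>A. A \<in> sets M \<Longrightarrow> measure (mkm M P) A = P A"
proof -
  have pos: "positive (sets M) (\<lambda>A. ennreal (P A))"
    using is_prob_empty[OF assms] by (simp add: positive_def)
  have ca: "countably_additive (sets M) (\<lambda>A. ennreal (P A))"
    unfolding countably_additive_def
  proof (intro allI impI)
    fix F :: "nat \<Rightarrow> 'a set"
    assume F: "range F \<subseteq> sets M" "disjoint_family F" "\<Union> (range F) \<in> sets M"
    then have "(\<lambda>n. P (F n)) sums P (\<Union>n. F n)" using assms unfolding is_prob_def by blast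
    moreover have "\<And>i. 0 \<le> P (F i)" using F assms unfolding is_prob_def by blast
    moreover have "0 \<le> P (\<Union>n. F n)" using F assms unfolding is_prob_def by blast
    ultimately have "(\<lambda>i. ennreal (P (F i))) sums ennreal (P (\<Union>n. F n))" by simp
    then show "(\<Sum>i. ennreal (P (F i))) = ennreal (P (\<Union> (range F)))" by (simp add: sums_iff)
  qed
  show em: "\<And>A. A \<in> sets M \<Longrightarrow> emeasure (mkm M P) A = ennreal (P A)"
    unfolding mkm_def by (rule emeasure_measure_of_sigma[OF sets.sigma_algebra_axioms pos ca])
  show ss: "sets (mkm M P) = sets M" unfolding mkm_def
    by (simp add: sets.sets_into_space sets.sigma_sets_eq subsetI)
  show sp: "space (mkm M P) = space M" unfolding mkm_def
    by (simp add: sets.sets_into_space subsetI)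
  show "finite_measure (mkm M P)"
    by (rule finite_measureI) (use assms em[of "space M"] in \<open>simp add: sp is_prob_def\<close>)
  show "\<And>A. A \<in> sets M \<Longrightarrow> measure (mkm M P) A = P A"
    using em assms unfolding is_prob_def by (simp add: measure_def)
qed


lemma core_add: "P \<in> core M \<mu> \<Longrightarrow> A \<in> sets M \<Longrightarrow> B \<in> sets M \<Longrightarrow> A \<inter> B = {} \<Longrightarrow> P (A \<union> B) = P A + P B"
  unfolding core_def by blast

lemma core_empty: "P \<in> core M \<mu> \<Longrightarrow> P {} = 0"
  using core_add[of P M \<mu> "{}" "{}"] by simp

lemma core_diff: assumes "P \<in> core M \<mu>" "A \<in> sets M" "B \<in> sets M" "A \<subseteq> B"
  shows "P (B - A) = P B - P A"
proof -
  have "B = A \<union> (B - A)" using assms by auto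
  then have "P B = P A + P (B - A)" using core_add[OF assms(1,2), of "B - A"] assms by auto
  then show ?thesis by simp
qed

lemma core_nonneg: "P \<in> core M \<mu> \<Longrightarrow> A \<in> sets M \<Longrightarrow> 0 \<le> P A"
  unfolding core_def by blast

lemma core_le: "P \<in> core M \<mu> \<Longrightarrow> A \<in> sets M \<Longrightarrow> P A \<le> \<mu> A"
  unfolding core_def by blast

lemma core_mono: assumes "P \<in> core M \<mu>" "A \<in> sets M" "B \<in> sets M" "A \<subseteq> B"
  shows "P A \<le> P B"
  using core_diff[OF assms] core_nonneg[OF assms(1), of "B - A"] assms by auto

lemma core_finite_union:
  assumes "P \<in> core M \<mu>" "range F \<subseteq> sets M" "disjoint_family F"
  shows "P (\<Union>i<(n::nat). F i) = (\<Sum>i<n. P (F i))"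
proof (induction n)
  case 0 then show ?case using core_empty[OF assms(1)] by simp
next
  case (Suc n)
  have "(\<Union>i<Suc n. F i) = (\<Union>i<n. F i) \<union> F n" by (auto simp: lessThan_Suc)
  moreover have "(\<Union>i<n. F i) \<inter> F n = {}"
  proof -
    have "F i \<inter> F n = {}" if "i < n" for i using assms(3) that unfolding disjoint_family_on_def by simp
    then show ?thesis by blast
  qed
  moreover have "(\<Union>i<n. F i) \<in> sets M" using assms(2) by auto
  ultimately have "P (\<Union>i<Suc n. F i) = P (\<Union>i<n. F i) + P (F n)"
    using core_add[OF assms(1)] assms(2) by auto
  then show ?case using Suc by simp
qed

lemma prob_in_core:
  assumes "is_prob M P" "\<forall>A\<in>sets M. P A \<le> \<mu> A"
  shows "P \<in> core M \<mu>"
proof -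
  interpret finite_measure "mkm M P" by (rule is_prob_mkm(1)[OF assms(1)])
  note m = is_prob_mkm(2-5)[OF assms(1)]
  have "\<forall>A\<in>sets M. 0 \<le> P A \<and> P A \<le> 1"
  proof
    fix A assume A: "A \<in> sets M"
    have "measure (mkm M P) A \<le> measure (mkm M P) (space M)"
      using A m by (intro finite_measure_mono) (auto simp: sets.sets_into_space)
    then show "0 \<le> P A \<and> P A \<le> 1" using A m assms(1) unfolding is_prob_def by auto
  qed
  moreover have "\<forall>A\<in>sets M. \<forall>B\<in>sets M. A \<inter> B = {} \<longrightarrow> P (A \<union> B) = P A + P B"
  proof (intro ballI impI)
    fix A B assume "A \<in> sets M" "B \<in> sets M" "A \<inter> B = {}"
    then show "P (A \<union> B) = P A + P B" using finite_measure_Union[of A B] m by auto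
  qed
  ultimately show ?thesis using assms unfolding core_def is_prob_def by blast
qed

lemma upper_prob_cont:
  assumes up: "upper_prob M V" and A: "range A \<subseteq> sets M" "decseq A" "(\<Inter>n. A n) = {}"
  shows "(\<lambda>n. V (A n)) \<longlonglongrightarrow> 0"
proof -
  obtain \<Lambda> where L: "\<Lambda> \<subseteq> {P. is_prob M P}" "compact (restr_sf M ` \<Lambda>)"
     "\<forall>A\<in>sets M. (\<exists>P\<in>\<Lambda>. P A = V A) \<and> (\<forall>P\<in>\<Lambda>. P A \<le> V A)"
    using up unfolding upper_prob_def by blast
  have cap: "is_capacity M V" using up unfolding upper_prob_def by blast
  have key: "\<exists>N. V (A N) < e" if e: "e > 0" for e
  proof (rule ccontr)
    assume "\<not> ?thesis"
    then have ge: "\<And>N. e \<le> V (A N)" by (simp add: not_less)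
    define C where "C n = {f :: 'a set \<Rightarrow> real. e \<le> f (A n)}" for n
    have "restr_sf M ` \<Lambda> \<inter> (\<Inter>n\<in>UNIV. C n) \<noteq> {}"
    proof (rule compact_imp_fip_image[OF L(2)])
      fix n :: nat
      show "closed (C n)" unfolding C_def
        by (rule closed_Collect_le) (auto intro: continuous_on_const)
    next
      fix I' :: "nat set" assume I': "finite I'" "I' \<subseteq> UNIV"
      define m where "m = Max (insert 0 I')"
      have mI: "\<And>i. i \<in> I' \<Longrightarrow> i \<le> m" using I' unfolding m_def by auto
      obtain P where P: "P \<in> \<Lambda>" "P (A m) = V (A m)" using L(3) A(1) by blast
      have Pc: "P \<in> core M V" using prob_in_core[of M P V] P L by blast
      have "restr_sf M P \<in> C i" if "i \<in> I'" for i
      proof -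
        have "A m \<subseteq> A i" using A(2) mI[OF that] by (simp add: decseq_def)
        then have "P (A m) \<le> P (A i)" using core_mono[OF Pc] A(1) by auto
        then show ?thesis using ge[of m] P A(1) unfolding C_def restr_sf_def by auto
      qed
      then show "restr_sf M ` \<Lambda> \<inter> (\<Inter>i\<in>I'. C i) \<noteq> {}" using P(1) by blast
    qed
    then obtain P where P: "P \<in> \<Lambda>" "\<And>n. restr_sf M P \<in> C n" by blast
    then have Pn: "\<And>n. e \<le> P (A n)" using A(1) unfolding C_def restr_sf_def
      by (metis (mono_tags, lifting) mem_Collect_eq range_subsetD)
    have Pp: "is_prob M P" using P L by blast
    interpret finite_measure "mkm M P" by (rule is_prob_mkm(1)[OF Pp])
    note m = is_prob_mkm(2-5)[OF Pp]
    have "(\<lambda>n. measure (mkm M P) (A n)) \<longlonglongrightarrow> measure (mkm M P) (\<Inter>i. A i)"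
      using A m by (intro finite_Lim_measure_decseq) auto
    moreover have "(\<lambda>n. P (A n)) = (\<lambda>n. measure (mkm M P) (A n))" using A m by auto
    ultimately have "(\<lambda>n. P (A n)) \<longlonglongrightarrow> 0" using A(3) by simp
    then have "e \<le> 0" using Pn by (intro tendsto_lowerbound) (auto intro: always_eventually)
    then show False using e by simp
  qed
  show ?thesis
  proof (rule LIMSEQ_I)
    fix r :: real assume "0 < r"
    then obtain N where N: "V (A N) < r" using key by blast
    have "norm (V (A n) - 0) < r" if "n \<ge> N" for n
    proof -
      have "A n \<subseteq> A N" using A(2) that by (simp add: decseq_def)
      then have "V (A n) \<le> V (A N)" "0 \<le> V (A n)" using cap A(1) unfolding is_capacity_def by auto
      then show ?thesis using N by simp
    qed
    then show "\<exists>no. \<forall>n\<ge>no. norm (V (A n) - 0) < r" by blast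
  qed
qed

lemma core_is_prob:
  assumes up: "upper_prob M V" and P: "P \<in> core M V"
  shows "is_prob M P"
proof -
  have "(\<lambda>n. P (F n)) sums P (\<Union>n. F n)" if F: "range F \<subseteq> sets M" "disjoint_family F" for F :: "nat \<Rightarrow> 'a set"
  proof -
    define R where "R n = (\<Union>i\<in>{n..}. F i)" for n
    have U: "(\<Union>n. F n) \<in> sets M" using F by auto
    have Rs: "range R \<subseteq> sets M" using F unfolding R_def by auto
    have Rd: "decseq R" by (auto simp: decseq_def R_def) (metis atLeast_iff order_trans)
    have Re: "(\<Inter>n. R n) = {}"
    proof (rule ccontr)
      assume "(\<Inter>n. R n) \<noteq> {}"
      then obtain x where x: "\<And>n. x \<in> R n" by blast
      then obtain i where i: "x \<in> F i" unfolding R_def by blast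
      obtain j where j: "j \<ge> Suc i" "x \<in> F j" using x[of "Suc i"] unfolding R_def by blast
      then have "i \<noteq> j" by simp
      then show False using F(2) i j unfolding disjoint_family_on_def by blast
    qed
    have V0: "(\<lambda>n. V (R n)) \<longlonglongrightarrow> 0" by (rule upper_prob_cont[OF up Rs Rd Re])
    have PR: "(\<lambda>n. P (R n)) \<longlonglongrightarrow> 0"
      by (rule tendsto_sandwich[of "\<lambda>_. 0" _ _ "\<lambda>n. V (R n)"])
         (use Rs core_nonneg[OF P] core_le[OF P] V0 in auto)
    have eq: "(\<Sum>i<n. P (F i)) = P (\<Union>n. F n) - P (R n)" for n
    proof -
      have d: "F i \<inter> F j = {}" if "i \<noteq> j" for i j using F(2) that unfolding disjoint_family_on_def by simp
      have "R n \<subseteq> (\<Union>n. F n)" unfolding R_def by auto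
      moreover have "(\<Union>n. F n) - R n = (\<Union>i<n. F i)"
      proof
        show "(\<Union>n. F n) - R n \<subseteq> (\<Union>i<n. F i)" unfolding R_def
          by (auto simp: not_le[symmetric]) (metis atLeast_iff lessThan_iff not_le)
        show "(\<Union>i<n. F i) \<subseteq> (\<Union>n. F n) - R n" unfolding R_def
        proof (auto)
          fix x i k assume "x \<in> F i" "i < n" "x \<in> F k" "n \<le> k"
          then show False using d[of i k] by auto
        qed
      qed
      ultimately show ?thesis using core_diff[OF P, of "R n" "\<Union>n. F n"] Rs U core_finite_union[OF P F]
        by auto
    qed
    have "(\<lambda>n. P (\<Union>n. F n) - P (R n)) \<longlonglongrightarrow> P (\<Union>n. F n) - 0"
      by (intro tendsto_intros PR)
    then show ?thesis unfolding sums_def eq by simp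
  qed
  then show ?thesis using P unfolding is_prob_def core_def by blast
qed


lemma funpow_space: "T \<in> measurable M M \<Longrightarrow> x \<in> space M \<Longrightarrow> (T^^k) x \<in> space M"
  by (induction k) (auto simp: measurable_space)

lemma pre_Suc1: assumes "T \<in> measurable M M"
  shows "(T^^Suc k) -` A \<inter> space M = T -` ((T^^k) -` A \<inter> space M) \<inter> space M"
  using assms by (auto simp: funpow_swap1 measurable_space)

lemma pre_Suc2: assumes "T \<in> measurable M M"
  shows "(T^^Suc k) -` A \<inter> space M = (T^^k) -` (T -` A \<inter> space M) \<inter> space M"
  using funpow_space[OF assms] by (auto simp: funpow_swap1)

lemma pre_sets: assumes "T \<in> measurable M M" "A \<in> sets M"
  shows "(T^^k) -` A \<inter> space M \<in> sets M"
proof (induction k)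
  case 0 then show ?case using assms(2) sets.sets_into_space by (simp add: Int_absorb2)
next
  case (Suc k)
  have "T -` ((T^^k) -` A \<inter> space M) \<inter> space M \<in> sets M" by (rule measurable_sets[OF assms(1) Suc])
  then show ?case by (simp only: pre_Suc1[OF assms(1)])
qed

lemma inv_iter: assumes "T \<in> measurable M M" "sf_invariant M T \<mu>" "A \<in> sets M"
  shows "\<mu> ((T^^k) -` A \<inter> space M) = \<mu> A"
proof (induction k)
  case 0 then show ?case using assms(3) sets.sets_into_space by (simp add: Int_absorb2)
next
  case (Suc k)
  have "\<mu> (T -` ((T^^k) -` A \<inter> space M) \<inter> space M) = \<mu> A"
    using assms(2)[unfolded sf_invariant_def, rule_format, OF pre_sets[OF assms(1,3)], of k] Suc by simp
  then show ?case by (simp only: pre_Suc1[OF assms(1)])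
qed

lemma core_avg:
  assumes "\<And>k. G k \<in> core M \<mu>"
  shows "(\<lambda>A. (\<Sum>k<Suc n. G k A) / real (Suc n)) \<in> core M \<mu>"
proof -
  have c: "\<And>k. \<forall>A\<in>sets M. 0 \<le> G k A \<and> G k A \<le> 1" "\<And>k. G k (space M) = 1"
    "\<And>k. \<forall>A\<in>sets M. \<forall>B\<in>sets M. A \<inter> B = {} \<longrightarrow> G k (A \<union> B) = G k A + G k B"
    "\<And>k. \<forall>A\<in>sets M. G k A \<le> \<mu> A"
    using assms unfolding core_def by blast+
  show ?thesis unfolding core_def
  proof (intro CollectI conjI ballI impI)
    fix A assume A: "A \<in> sets M"
    have "(\<Sum>k<Suc n. G k A) \<le> (\<Sum>k<Suc n. 1)" using c(1) A by (intro sum_mono) auto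
    moreover have "0 \<le> (\<Sum>k<Suc n. G k A)" using c(1) A by (intro sum_nonneg) auto
    ultimately show "0 \<le> (\<Sum>k<Suc n. G k A) / real (Suc n)" "(\<Sum>k<Suc n. G k A) / real (Suc n) \<le> 1"
      by auto
    have "(\<Sum>k<Suc n. G k A) \<le> (\<Sum>k<Suc n. \<mu> A)" using c(4) A by (intro sum_mono) auto
    then show "(\<Sum>k<Suc n. G k A) / real (Suc n) \<le> \<mu> A" by (simp add: divide_le_eq mult.commute)
  next
    show "(\<Sum>k<Suc n. G k (space M)) / real (Suc n) = 1" using c(2) by simp
  next
    fix A B assume "A \<in> sets M" "B \<in> sets M" "A \<inter> B = {}"
    then have "(\<Sum>k<Suc n. G k (A \<union> B)) = (\<Sum>k<Suc n. G k A) + (\<Sum>k<Suc n. G k B)"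
      using c(3) by (simp add: sum.distrib)
    then show "(\<Sum>k<Suc n. G k (A \<union> B)) / real (Suc n) =
      (\<Sum>k<Suc n. G k A) / real (Suc n) + (\<Sum>k<Suc n. G k B) / real (Suc n)"
      by (simp add: add_divide_distrib)
  qed
qed

lemma coord_tendsto: "((\<lambda>f. f A) \<longlongrightarrow> (x::'b \<Rightarrow> real) A) (inf (nhds x) F)"
proof -
  have "((\<lambda>f. f) \<longlongrightarrow> x) (inf (nhds x) F)"
    by (rule tendsto_mono[OF inf_le1]) (simp add: filterlim_ident)
  then show ?thesis
    by (rule continuous_on_tendsto_compose[OF continuous_on_product_coordinates]) auto
qed



lemma exists_inv:
  assumes T: "T \<in> measurable M M" and up: "upper_prob M V" and inv: "sf_invariant M T V"
  shows "\<exists>Q. Q \<in> core M V \<and> sf_invariant M T Q"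
proof -
  obtain \<Lambda> where L: "\<Lambda> \<subseteq> {P. is_prob M P}"
     "\<forall>A\<in>sets M. (\<exists>P\<in>\<Lambda>. P A = V A) \<and> (\<forall>P\<in>\<Lambda>. P A \<le> V A)"
    using up unfolding upper_prob_def by blast
  then obtain P0 where P0: "P0 \<in> \<Lambda>" by blast
  have P0c: "P0 \<in> core M V" using prob_in_core[of M P0 V] P0 L by blast
  define Pk where "Pk k A = P0 ((T^^k) -` A \<inter> space M)" for k A
  have Pkc: "Pk k \<in> core M V" for k
    unfolding core_def
  proof (intro CollectI conjI ballI impI)
    fix A assume A: "A \<in> sets M"
    show "0 \<le> Pk k A" "Pk k A \<le> 1" using P0c pre_sets[OF T A] unfolding Pk_def core_def by auto
    show "Pk k A \<le> V A" using core_le[OF P0c pre_sets[OF T A]] inv_iter[OF T inv A] unfolding Pk_def by simp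
  next
    have "(T^^k) -` space M \<inter> space M = space M" using funpow_space[OF T] by auto
    then show "Pk k (space M) = 1" using P0c unfolding Pk_def core_def by simp
  next
    fix A B assume A: "A \<in> sets M" "B \<in> sets M" "A \<inter> B = {}"
    have "(T^^k) -` (A \<union> B) \<inter> space M = ((T^^k) -` A \<inter> space M) \<union> ((T^^k) -` B \<inter> space M)" by auto
    moreover have "((T^^k) -` A \<inter> space M) \<inter> ((T^^k) -` B \<inter> space M) = {}" using A by auto
    ultimately show "Pk k (A \<union> B) = Pk k A + Pk k B"
      using core_add[OF P0c pre_sets[OF T A(1)] pre_sets[OF T A(2)]] unfolding Pk_def by simp
  qed
  define s where "s n = (\<lambda>A. (\<Sum>k<Suc n. Pk k A) / real (Suc n))" for n
  have sc: "s n \<in> core M V" for n unfolding s_def by (rule core_avg[OF Pkc])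
  define r where "r n = restr_sf M (s n)" for n
  define K0 where "K0 = PiE UNIV (\<lambda>_::'a set. {0..1::real})"
  have "compactin (product_topology (\<lambda>_. euclidean) UNIV) K0"
    unfolding K0_def compactin_PiE by simp
  then have cK0: "compact K0" by (simp add: euclidean_product_topology)
  have rK0: "r n \<in> K0" for n
    using sc[of n] unfolding r_def K0_def restr_sf_def core_def by auto
  define F where "F = filtermap r sequentially"
  have Fnb: "F \<noteq> bot" unfolding F_def by (simp add: filtermap_bot_iff)
  have evK: "eventually (\<lambda>x. x \<in> K0) F" unfolding F_def eventually_filtermap using rK0 by simp
  obtain x where x: "x \<in> K0" and G: "inf (nhds x) F \<noteq> bot"
    using compact_filter[THEN iffD1, OF cK0, rule_format, OF Fnb evK] by blast
  define G where "G = inf (nhds x) F"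
  have Gbot: "G \<noteq> bot" using G unfolding G_def by simp
  have ev: "eventually P G" if "\<And>n. P (r n)" for P
  proof -
    have "eventually P F" unfolding F_def eventually_filtermap using that by simp
    then show ?thesis unfolding G_def by (rule filter_leD[OF inf_le2])
  qed
  have co: "((\<lambda>f. f A) \<longlongrightarrow> x A) G" for A unfolding G_def by (rule coord_tendsto)
  have eq_lim: "g x = c" if "(g \<longlongrightarrow> g x) G" "\<And>n. g (r n) = c" for g :: "_ \<Rightarrow> real" and c
  proof (rule antisym)
    show "g x \<le> c" using that by (intro tendsto_upperbound[OF that(1) _ Gbot] ev) auto
    show "c \<le> g x" using that by (intro tendsto_lowerbound[OF that(1) _ Gbot] ev) auto
  qed
  have xcore: "x \<in> core M V" unfolding core_def
  proof (intro CollectI conjI ballI impI)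
    fix A assume A: "A \<in> sets M"
    show "0 \<le> x A" "x A \<le> 1" using x unfolding K0_def by auto
    have "\<And>n. r n A \<le> V A" using core_le[OF sc A] A unfolding r_def restr_sf_def by simp
    then show "x A \<le> V A" by (intro tendsto_upperbound[OF co _ Gbot] ev)
  next
    have "\<And>n. r n (space M) = 1" using sc unfolding r_def restr_sf_def core_def by simp
    then show "x (space M) = 1" using eq_lim[of "\<lambda>f. f (space M)" 1, OF co] by simp
  next
    fix A B assume A: "A \<in> sets M" "B \<in> sets M" "A \<inter> B = {}"
    have "(\<lambda>f. f (A \<union> B) - f A - f B) x = 0"
    proof (rule eq_lim)
      show "((\<lambda>f. f (A \<union> B) - f A - f B) \<longlongrightarrow> (\<lambda>f. f (A \<union> B) - f A - f B) x) G"
        by (intro tendsto_diff co)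
      fix n show "r n (A \<union> B) - r n A - r n B = 0"
        using core_add[OF sc A] A unfolding r_def restr_sf_def by auto
    qed
    then show "x (A \<union> B) = x A + x B" by simp
  qed
  have "sf_invariant M T x" unfolding sf_invariant_def
  proof
    fix A assume A: "A \<in> sets M"
    define g where "g f = f (T -` A \<inter> space M) - f A" for f :: "'a set \<Rightarrow> real"
    have TA: "T -` A \<inter> space M \<in> sets M" using T A by (simp add: measurable_sets)
    have gr: "g (r n) = (Pk (Suc n) A - Pk 0 A) / real (Suc n)" for n
    proof -
      have "Pk k (T -` A \<inter> space M) = Pk (Suc k) A" for k
        unfolding Pk_def using pre_Suc2[OF T, of k A] by simp
      then have "g (r n) = (\<Sum>k<Suc n. Pk (Suc k) A - Pk k A) / real (Suc n)"
        unfolding g_def r_def restr_sf_def s_def using A TA by (simp add: sum_subtractf diff_divide_distrib)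
      then show ?thesis using sum_lessThan_telescope[of "\<lambda>k. Pk k A" "Suc n"] by simp
    qed
    have bnd: "\<bar>g (r n)\<bar> \<le> inverse (real (Suc n))" for n
    proof -
      have "\<bar>Pk (Suc n) A - Pk 0 A\<bar> \<le> 1" using Pkc[of "Suc n"] Pkc[of 0] A unfolding core_def by fastforce
      then show ?thesis unfolding gr by (simp add: divide_inverse abs_mult)
    qed
    have "(\<lambda>n. g (r n)) \<longlonglongrightarrow> 0"
    proof (rule tendsto_sandwich[of "\<lambda>n. - inverse (real (Suc n))" _ _ "\<lambda>n. inverse (real (Suc n))"])
      show "\<forall>\<^sub>F n in sequentially. - inverse (real (Suc n)) \<le> g (r n)"
        using bnd by (auto intro!: always_eventually) (metis abs_le_iff minus_le_iff)
      show "\<forall>\<^sub>F n in sequentially. g (r n) \<le> inverse (real (Suc n))"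
        using bnd by (auto intro!: always_eventually) (metis abs_le_iff)
      show "(\<lambda>n. - inverse (real (Suc n))) \<longlonglongrightarrow> 0"
        using tendsto_minus[OF LIMSEQ_inverse_real_of_nat] by simp
      show "(\<lambda>n. inverse (real (Suc n))) \<longlonglongrightarrow> 0" by (rule LIMSEQ_inverse_real_of_nat)
    qed
    then have "(g \<longlongrightarrow> 0) F" unfolding F_def by (simp add: filterlim_filtermap)
    then have l0: "(g \<longlongrightarrow> 0) G" unfolding G_def by (rule tendsto_mono[OF inf_le2])
    have "(g \<longlongrightarrow> g x) G" unfolding g_def by (intro tendsto_diff co)
    then have "g x = 0" using tendsto_unique[OF Gbot _ l0] by blast
    then show "x (T -` A \<inter> space M) = x A" unfolding g_def by simp
  qed
  then show ?thesis using xcore by blast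
qed



lemma prob_core_self: "is_prob M P \<Longrightarrow> P \<in> core M P"
  by (rule prob_in_core) auto

lemma null_union:
  fixes D :: "nat \<Rightarrow> 'a set"
  assumes p1: "is_prob M Q1" and p2: "is_prob M Q2" and D: "range D \<subseteq> sets M"
    and S: "\<And>n. D n \<subseteq> S" and le: "\<And>X. X \<in> sets M \<Longrightarrow> X \<subseteq> S \<Longrightarrow> Q2 X \<le> Q1 X"
    and eq: "\<And>n. Q1 (D n) = Q2 (D n)"
  shows "Q1 (\<Union>n. D n) = Q2 (\<Union>n. D n)"
proof -
  note c1 = prob_core_self[OF p1] and c2 = prob_core_self[OF p2]
  define E where "E = disjointed D"
  have Es: "range E \<subseteq> sets M" unfolding E_def using D by (rule sets.range_disjointed_sets)
  have Ed: "disjoint_family E" unfolding E_def by (rule disjoint_family_disjointed)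
  have EU: "(\<Union>n. E n) = (\<Union>n. D n)" unfolding E_def by (rule UN_disjointed_eq)
  have ED: "E n \<subseteq> D n" for n unfolding E_def by (rule disjointed_subset)
  have eqE: "Q1 (E n) = Q2 (E n)" for n
  proof -
    have En: "E n \<in> sets M" "D n \<in> sets M" using Es D by auto
    have a: "Q2 (E n) \<le> Q1 (E n)" using le[OF En(1)] ED[of n] S[of n] by blast
    have b: "Q2 (D n - E n) \<le> Q1 (D n - E n)" using le[of "D n - E n"] En S[of n] by blast
    have "Q1 (D n - E n) = Q1 (D n) - Q1 (E n)" "Q2 (D n - E n) = Q2 (D n) - Q2 (E n)"
      using core_diff[OF c1 En ED[of n]] core_diff[OF c2 En ED[of n]] by auto
    then show ?thesis using a b eq[of n] by linarith
  qed
  have s1: "(\<lambda>n. Q1 (E n)) sums Q1 (\<Union>n. E n)" and s2: "(\<lambda>n. Q2 (E n)) sums Q2 (\<Union>n. E n)"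
    using p1 p2 Es Ed unfolding is_prob_def by blast+
  have "(\<lambda>n. Q1 (E n)) = (\<lambda>n. Q2 (E n))" using eqE by simp
  then have "Q1 (\<Union>n. E n) = Q2 (\<Union>n. E n)" using s1 s2 sums_unique2 by metis
  then show ?thesis unfolding EU .
qed

lemma uniq:
  assumes T: "T \<in> measurable M M" and p1: "is_prob M Q1" and p2: "is_prob M Q2"
    and i1: "sf_invariant M T Q1" and i2: "sf_invariant M T Q2"
    and agree: "\<And>A. A \<in> inv_sets M T \<Longrightarrow> Q1 A = Q2 A"
  shows "\<forall>A\<in>sets M. Q1 A = Q2 A"
proof -
  note c1 = prob_core_self[OF p1] and c2 = prob_core_self[OF p2]
  note m1 = is_prob_mkm[OF p1] and m2 = is_prob_mkm[OF p2]
  have nn1: "\<And>X. X \<in> sets M \<Longrightarrow> 0 \<le> Q1 X" and nn2: "\<And>X. X \<in> sets M \<Longrightarrow> 0 \<le> Q2 X"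
    using p1 p2 unfolding is_prob_def by auto
  obtain Y where Y: "Y \<in> sets (mkm M Q1)"
    "\<forall>X\<in>sets (mkm M Q1). X \<subseteq> Y \<longrightarrow> emeasure (mkm M Q2) X \<le> emeasure (mkm M Q1) X"
    "\<forall>X\<in>sets (mkm M Q1). X \<inter> Y = {} \<longrightarrow> emeasure (mkm M Q1) X \<le> emeasure (mkm M Q2) X"
    using finite_unsigned_Hahn_decomposition[of "mkm M Q1" "mkm M Q2"] m1 m2 by auto
  have Ys: "Y \<in> sets M" using Y m1 by simp
  have pos: "Q2 X \<le> Q1 X" if "X \<in> sets M" "X \<subseteq> Y" for X
  proof -
    have "ennreal (Q2 X) \<le> ennreal (Q1 X)" using Y(2) that m1 m2 by simp
    then show ?thesis using nn1[OF that(1)] by (simp add: ennreal_le_iff)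
  qed
  have neg: "Q1 X \<le> Q2 X" if "X \<in> sets M" "X \<inter> Y = {}" for X
  proof -
    have "ennreal (Q1 X) \<le> ennreal (Q2 X)" using Y(3) that m1 m2 by simp
    then show ?thesis using nn2[OF that(1)] by (simp add: ennreal_le_iff)
  qed
  define lam where "lam X = Q1 X - Q2 X" for X
  have ladd: "lam (X \<union> Z) = lam X + lam Z" if "X \<in> sets M" "Z \<in> sets M" "X \<inter> Z = {}" for X Z
    using core_add[OF c1 that] core_add[OF c2 that] unfolding lam_def by simp
  have lsplit: "lam X = lam (X \<inter> Z) + lam (X - Z)" if "X \<in> sets M" "Z \<in> sets M" for X Z
  proof -
    have "X = (X \<inter> Z) \<union> (X - Z)" by blast
    then have "lam X = lam ((X \<inter> Z) \<union> (X - Z))" by simp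
    also have "\<dots> = lam (X \<inter> Z) + lam (X - Z)" using that by (intro ladd) auto
    finally show ?thesis .
  qed
  have lpos: "0 \<le> lam X" if "X \<in> sets M" "X \<subseteq> Y" for X using pos[OF that] unfolding lam_def by simp
  have lneg: "lam X \<le> 0" if "X \<in> sets M" "X \<inter> Y = {}" for X using neg[OF that] unfolding lam_def by simp
  define pre where "pre n = (T^^n) -` Y \<inter> space M" for n
  have pres: "pre n \<in> sets M" for n unfolding pre_def by (rule pre_sets[OF T Ys])
  have lpre: "lam (pre n) = lam Y" for n
    unfolding pre_def lam_def using inv_iter[OF T i1 Ys] inv_iter[OF T i2 Ys] by simp
  define D1 where "D1 n = Y - pre n" for n
  define D2 where "D2 n = pre n - Y" for n
  have D1s: "range D1 \<subseteq> sets M" and D2s: "range D2 \<subseteq> sets M" unfolding D1_def D2_def using Ys pres by auto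
  have D12: "lam (D1 n) = 0 \<and> lam (D2 n) = 0" for n
  proof -
    have a: "lam Y = lam (Y \<inter> pre n) + lam (D1 n)"
      using lsplit[OF Ys pres[of n]] unfolding D1_def by simp
    have b: "lam (pre n) = lam (Y \<inter> pre n) + lam (D2 n)"
      using lsplit[OF pres[of n] Ys] unfolding D2_def by (simp add: Int_commute)
    have "0 \<le> lam (D1 n)" using lpos[of "D1 n"] Ys pres unfolding D1_def by auto
    moreover have "lam (D2 n) \<le> 0" using lneg[of "D2 n"] Ys pres unfolding D2_def by auto
    ultimately show ?thesis using a b lpre[of n] by linarith
  qed
  have U1: "Q1 (\<Union>n. D1 n) = Q2 (\<Union>n. D1 n)"
    by (rule null_union[OF p1 p2 D1s, of Y]) (use pos D12 in \<open>auto simp: D1_def lam_def\<close>)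
  have U2: "Q2 (\<Union>n. D2 n) = Q1 (\<Union>n. D2 n)"
  proof (rule null_union[OF p2 p1 D2s, of "- Y"])
    show "D2 n \<subseteq> - Y" for n unfolding D2_def by auto
    show "Q1 X \<le> Q2 X" if "X \<in> sets M" "X \<subseteq> - Y" for X using neg[OF that(1)] that(2) by blast
    show "Q2 (D2 n) = Q1 (D2 n)" for n using D12[of n] unfolding lam_def by simp
  qed
  define Y' where "Y' = (\<Inter>N. \<Union>n\<in>{N..}. pre n)"
  have UNs: "(\<Union>n\<in>{N..}. pre n) \<in> sets M" for N
    by (rule sets.countable_UN'') (auto simp: pres)
  have Y's: "Y' \<in> sets M" unfolding Y'_def
    by (rule sets.countable_INT) (use UNs in auto)
  have Y'sp: "Y' \<subseteq> space M"
  proof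
    fix x assume "x \<in> Y'"
    then have "x \<in> (\<Union>n\<in>{0..}. pre n)" unfolding Y'_def by blast
    then show "x \<in> space M" unfolding pre_def by blast
  qed
  have "T -` Y' \<inter> space M = Y'"
  proof
    show "T -` Y' \<inter> space M \<subseteq> Y'"
    proof
      fix x assume x: "x \<in> T -` Y' \<inter> space M"
      have "x \<in> (\<Union>n\<in>{N..}. pre n)" for N
      proof -
        obtain n where n: "n \<ge> N" "T x \<in> pre n" using x unfolding Y'_def by blast
        then have "(T^^Suc n) x \<in> Y" unfolding pre_def by (simp add: funpow_swap1)
        then show ?thesis using n x unfolding pre_def by (intro UN_I[of "Suc n"]) auto
      qed
      then show "x \<in> Y'" unfolding Y'_def by blast
    qed
    show "Y' \<subseteq> T -` Y' \<inter> space M"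
    proof
      fix x assume x: "x \<in> Y'"
      have xs: "x \<in> space M" "T x \<in> space M" using x Y'sp T by (auto simp: measurable_space)
      have "T x \<in> (\<Union>n\<in>{N..}. pre n)" for N
      proof -
        obtain n where n: "n \<ge> Suc N" "x \<in> pre n" using x unfolding Y'_def by blast
        then obtain m where m: "n = Suc m" "m \<ge> N" by (cases n) auto
        then have "(T^^m) (T x) \<in> Y" using n unfolding pre_def by (simp add: funpow_swap1)
        then show ?thesis using m xs unfolding pre_def by (intro UN_I[of m]) auto
      qed
      then show "x \<in> T -` Y' \<inter> space M" using xs unfolding Y'_def by blast
    qed
  qed
  then have "Y' \<in> inv_sets M T" using Y's unfolding inv_sets_def by blast
  then have lY': "lam Y' = 0" using agree unfolding lam_def by simp
  have sub1: "Y - Y' \<subseteq> (\<Union>n. D1 n)"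
  proof
    fix x assume x: "x \<in> Y - Y'"
    then obtain N where "x \<notin> (\<Union>n\<in>{N..}. pre n)" unfolding Y'_def by blast
    then have "x \<notin> pre N" by blast
    then show "x \<in> (\<Union>n. D1 n)" using x unfolding D1_def by blast
  qed
  have sub2: "Y' - Y \<subseteq> (\<Union>n. D2 n)"
  proof
    fix x assume x: "x \<in> Y' - Y"
    then have "x \<in> (\<Union>n\<in>{0..}. pre n)" unfolding Y'_def by blast
    then obtain n where "x \<in> pre n" by blast
    then show "x \<in> (\<Union>n. D2 n)" using x unfolding D2_def by blast
  qed
  have UD1s: "(\<Union>n. D1 n) \<in> sets M" and UD2s: "(\<Union>n. D2 n) \<in> sets M" using D1s D2s by auto
  have "lam (Y - Y') = 0"
  proof -
    have e: "(\<Union>n. D1 n) \<inter> (Y - Y') = Y - Y'" using sub1 by blast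
    have "lam (\<Union>n. D1 n) = lam (Y - Y') + lam ((\<Union>n. D1 n) - (Y - Y'))"
      using lsplit[of "\<Union>n. D1 n" "Y - Y'"] e Ys Y's UD1s by auto
    moreover have "0 \<le> lam (Y - Y')" using lpos Ys Y's by auto
    moreover have "0 \<le> lam ((\<Union>n. D1 n) - (Y - Y'))"
      by (rule lpos) (use UD1s Ys Y's in \<open>auto simp: D1_def\<close>)
    moreover have "lam (\<Union>n. D1 n) = 0" using U1 unfolding lam_def by simp
    ultimately show ?thesis by linarith
  qed
  moreover have "lam (Y' - Y) = 0"
  proof -
    have e: "(\<Union>n. D2 n) \<inter> (Y' - Y) = Y' - Y" using sub2 by blast
    have "lam (\<Union>n. D2 n) = lam (Y' - Y) + lam ((\<Union>n. D2 n) - (Y' - Y))"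
      using lsplit[of "\<Union>n. D2 n" "Y' - Y"] e Ys Y's UD2s by auto
    moreover have "lam (Y' - Y) \<le> 0" using lneg Ys Y's by auto
    moreover have "lam ((\<Union>n. D2 n) - (Y' - Y)) \<le> 0"
      by (rule lneg) (use UD2s Ys Y's in \<open>auto simp: D2_def\<close>)
    moreover have "lam (\<Union>n. D2 n) = 0" using U2 unfolding lam_def by simp
    ultimately show ?thesis by linarith
  qed
  moreover have "lam Y = lam (Y \<inter> Y') + lam (Y - Y')"
    using lsplit[OF Ys Y's] by simp
  moreover have "lam Y' = lam (Y \<inter> Y') + lam (Y' - Y)"
    using lsplit[OF Y's Ys] by (simp add: Int_commute)
  ultimately have lY: "lam Y = 0" using lY' by linarith
  have lle: "lam A \<le> 0" if A: "A \<in> sets M" for A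
  proof -
    have "lam Y = lam (A \<inter> Y) + lam (Y - A)"
      using lsplit[OF Ys A] by (simp add: Int_commute)
    moreover have "0 \<le> lam (A \<inter> Y)" by (rule lpos) (use A Ys in auto)
    moreover have "0 \<le> lam (Y - A)" by (rule lpos) (use A Ys in auto)
    moreover have "lam A = lam (A \<inter> Y) + lam (A - Y)"
      using lsplit[OF A Ys] by simp
    moreover have "lam (A - Y) \<le> 0" by (rule lneg) (use A Ys in auto)
    ultimately show ?thesis using lY by linarith
  qed
  have lsp: "lam (space M) = 0" using p1 p2 unfolding lam_def is_prob_def by simp
  show ?thesis
  proof
    fix A assume A: "A \<in> sets M"
    have "space M \<inter> A = A" using sets.sets_into_space[OF A] by blast
    then have "lam (space M) = lam A + lam (space M - A)"
      using lsplit[OF sets.top A] by simp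
    moreover have "space M - A \<in> sets M" using A by auto
    ultimately have "lam A = 0" using lle[OF A] lle[of "space M - A"] lsp by linarith
    then show "Q1 A = Q2 A" unfolding lam_def by simp
  qed
qed



theorem theorem3p2:
  fixes M :: "'a measure" and T :: "'a \<Rightarrow> 'a" and V :: "'a set \<Rightarrow> real"
  assumes "T \<in> measurable M M"
    and "upper_prob M V"
    and "sf_invariant M T V"
  shows "(cap_ergodic M T V \<longleftrightarrow>
            (\<exists>Q\<in>erg_probs M T \<inter> core M V.
               \<forall>P\<in>core M V. \<forall>A\<in>inv_sets M T. P A = Q A))
       \<and> (\<forall>Q1 Q2.
            Q1 \<in> erg_probs M T \<inter> core M V \<and> (\<forall>P\<in>core M V. \<forall>A\<in>inv_sets M T. P A = Q1 A) \<and>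
            Q2 \<in> erg_probs M T \<inter> core M V \<and> (\<forall>P\<in>core M V. \<forall>A\<in>inv_sets M T. P A = Q2 A)
            \<longrightarrow> (\<forall>A\<in>sets M. Q1 A = Q2 A))"
proof (intro conjI iffI allI impI)
  note T = assms(1) and up = assms(2) and inv = assms(3)
  have cap: "is_capacity M V" using up unfolding upper_prob_def by blast
  {
    assume erg: "cap_ergodic M T V"
    have agree: "P B = (if V B = 0 then 0 else 1)" if P: "P \<in> core M V" and B: "B \<in> inv_sets M T" for P B
    proof -
      have Bs: "B \<in> sets M" using B unfolding inv_sets_def by blast
      have "V B = 0 \<or> V (space M - B) = 0" using erg B unfolding cap_ergodic_def by blast
      then show ?thesis
      proof
        assume "V B = 0"
        then show ?thesis using core_le[OF P Bs] core_nonneg[OF P Bs] by simp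
      next
        assume h: "V (space M - B) = 0"
        have "P (space M - B) = 0"
          using core_le[OF P, of "space M - B"] core_nonneg[OF P, of "space M - B"] Bs h by auto
        moreover have "P (space M - B) = P (space M) - P B"
          using core_diff[OF P Bs sets.top] sets.sets_into_space[OF Bs] by simp
        moreover have "P (space M) = 1" using P unfolding core_def by blast
        moreover have "V B \<noteq> 0"
        proof
          assume "V B = 0"
          have "P B \<le> 0" using core_le[OF P Bs] \<open>V B = 0\<close> by simp
          then show False using calculation by simp
        qed
        ultimately show ?thesis by simp
      qed
    qed
    obtain Q where Q: "Q \<in> core M V" "sf_invariant M T Q" using exists_inv[OF T up inv] by blast
    have Qp: "is_prob M Q" by (rule core_is_prob[OF up Q(1)])
    have "Q \<in> erg_probs M T" unfolding erg_probs_def using Qp Q(2) agree[OF Q(1)] by simp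
    moreover have "\<forall>P\<in>core M V. \<forall>A\<in>inv_sets M T. P A = Q A"
    proof (intro ballI)
      fix P A assume "P \<in> core M V" "A \<in> inv_sets M T"
      then show "P A = Q A" using agree[of P A] agree[OF Q(1), of A] by simp
    qed
    ultimately show "\<exists>Q\<in>erg_probs M T \<inter> core M V. \<forall>P\<in>core M V. \<forall>A\<in>inv_sets M T. P A = Q A"
      using Q(1) by blast
  }
  {
    assume "\<exists>Q\<in>erg_probs M T \<inter> core M V. \<forall>P\<in>core M V. \<forall>A\<in>inv_sets M T. P A = Q A"
    then obtain Q where Qe: "Q \<in> erg_probs M T" and Qc: "Q \<in> core M V"
      and ag: "\<And>P A. P \<in> core M V \<Longrightarrow> A \<in> inv_sets M T \<Longrightarrow> P A = Q A" by blast
    obtain \<Lambda> where L: "\<Lambda> \<subseteq> {P. is_prob M P}"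
       "\<forall>A\<in>sets M. (\<exists>P\<in>\<Lambda>. P A = V A) \<and> (\<forall>P\<in>\<Lambda>. P A \<le> V A)"
      using up unfolding upper_prob_def by blast
    have VQ: "V B = Q B" if B: "B \<in> inv_sets M T" for B
    proof -
      have Bs: "B \<in> sets M" using B unfolding inv_sets_def by blast
      obtain P where P: "P \<in> \<Lambda>" "P B = V B" using L(2) Bs by blast
      have "P \<in> core M V" using prob_in_core[of M P V] P L by blast
      then show ?thesis using ag[OF _ B] P by auto
    qed
    show "cap_ergodic M T V" unfolding cap_ergodic_def
    proof (rule conjI[OF inv], intro ballI)
      fix B assume B: "B \<in> inv_sets M T"
      have Bs: "B \<in> sets M" using B unfolding inv_sets_def by blast
      have Bc: "space M - B \<in> inv_sets M T"
        using B T unfolding inv_sets_def by (auto simp: measurable_space)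
      have "Q B = 0 \<or> Q B = 1" using Qe B unfolding erg_probs_def by blast
      moreover have "Q (space M - B) = 1 - Q B"
        using core_diff[OF Qc Bs sets.top] sets.sets_into_space[OF Bs] Qc unfolding core_def by simp
      ultimately show "(V B = 0 \<or> V B = 1) \<and> (V B = 0 \<or> V (space M - B) = 0)"
        using VQ[OF B] VQ[OF Bc] by auto
    qed
  }
  {
    fix Q1 Q2 :: "'a set \<Rightarrow> real"
    assume h: "Q1 \<in> erg_probs M T \<inter> core M V \<and> (\<forall>P\<in>core M V. \<forall>A\<in>inv_sets M T. P A = Q1 A) \<and>
            Q2 \<in> erg_probs M T \<inter> core M V \<and> (\<forall>P\<in>core M V. \<forall>A\<in>inv_sets M T. P A = Q2 A)"
    show "\<forall>A\<in>sets M. Q1 A = Q2 A"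
    proof (rule uniq[OF T])
      show "is_prob M Q1" "is_prob M Q2" "sf_invariant M T Q1" "sf_invariant M T Q2"
        using h unfolding erg_probs_def by auto
      show "\<And>A. A \<in> inv_sets M T \<Longrightarrow> Q1 A = Q2 A" using h by auto
    qed
  }
qed

end
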